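(* Let $\triangle PQR$ be a (closed, filled) triangle in $D$ and write $\psi=\psi_{\triangle PQR}$. The following are equivalent: (1) there exists $\alpha\in S^1$ with $\psi^5(\alpha)=\alpha$; (2) $\rho(\psi)=\frac{2}{5}$; (3) there exist five points $\alpha_0<\alpha_1<\alpha_2<\alpha_3<\alpha_4$ in $[0,1)$ such that $\psi(\pi(\alpha_i))=\pi(\alpha_j)$ whenever $j\equiv i+2 \pmod 5$; (4) there exists $\alpha\in S^1$ such that $\overline{\psi}^5(x)=x+2$ for $x\in\pi^{-1}(\alpha)$, where $\overline\psi$ is the lift of $\psi$ with $\overline\psi(0)\in[0,1)$.
   Context: $D$ is the open unit disk in $\mathbb R^2$, $S^1$ its boundary circle identified with $\mathbb R/\mathbb Z$ via the counterclockwise normalized angle, and $\pi:\mathbb R\to S^1$, $\pi(x)=x-\lfloor x\rfloor$. For a closed convex $U\subset D$ and $v\in S^1$, $\psi_U(v)$ is the point $w\in S^1\setminus\{v\}$ such that the line $vw$ meets $U$ and $U$ lies in the closed half-plane to the left of the directed line from $v$ to $w$; it is an orientation-preserving homeomorphism of $S^1$. For such $f$, $\rho(f)=\lim_{n\to\infty}(\overline f^n(x)-x)/n$ with $\overline f$ the lift to $\mathbb R$ satisfying $\overline f(0)\in[0,1)$. *)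

theory Defs
  imports "HOL-Analysis.Analysis"
begin

text \<open>S^1 is identified with [0,1) via the normalized counterclockwise angle;
  the point of the unit circle with normalized angle t is circ t.
  The projection pi from the reals to S^1 is frac.\<close>
definition circ :: "real \<Rightarrow> complex" where
  "circ t = cis (2 * pi * t)"

text \<open>Signed cross product: nonnegative iff z lies in the closed half-plane to
  the left of the directed line from a to b (for a \<noteq> b); zero iff z lies on the line.\<close>
definition cross3 :: "complex \<Rightarrow> complex \<Rightarrow> complex \<Rightarrow> real" where
  "cross3 a b z = Im (cnj (b - a) * (z - a))"

definition psi :: "complex set \<Rightarrow> real \<Rightarrow> real" where
  "psi U v = (THE w. w \<in> {0..<1} \<and> w \<noteq> v \<and>
      (\<exists>u\<in>U. cross3 (circ v) (circ w) u = 0) \<and>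
      (\<forall>u\<in>U. cross3 (circ v) (circ w) u \<ge> 0))"

definition lift :: "(real \<Rightarrow> real) \<Rightarrow> real \<Rightarrow> real" where
  "lift f = (THE F. continuous_on UNIV F \<and> (\<forall>x. frac (F x) = f (frac x)) \<and> F 0 \<in> {0..<1})"

definition rot_num :: "(real \<Rightarrow> real) \<Rightarrow> real" where
  "rot_num f = (THE r. \<forall>x. (\<lambda>n. (((lift f) ^^ n) x - x) / real n) \<longlonglongrightarrow> r)"

end

theory Submission
  imports Defs
begin

definition zt :: "complex \<Rightarrow> real \<Rightarrow> complex" where
  "zt V x = V * cis (- 2 * pi * x)"

definition tV :: "complex \<Rightarrow> real \<Rightarrow> real" where
  "tV V x = 1/2 - arctan (Im (zt V x) / (1 - Re (zt V x))) / pi"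

definition hV :: "complex \<Rightarrow> real \<Rightarrow> real \<Rightarrow> real" where
  "hV V x t = (1 - Re (zt V x)) * cos (pi * t) - Im (zt V x) * sin (pi * t)"

lemma cross3_aux:
  "cross3 (cis a) (cis (a + 2*b)) V = 2 * sin b * ((1 - Re (V * cis (-a))) * cos b - Im (V * cis (-a)) * sin b)"
proof -
  have sc: "sin b^2 + cos b^2 = 1" by simp
  have sc2: "sin a^2 + cos a^2 = 1" by simp
  show ?thesis
    unfolding cross3_def
    apply (simp only: cis.ctr cos_add sin_add sin_double cos_double complex_cnj_diff
       complex.sel minus_complex.sel times_complex.sel cnj.sel cos_minus sin_minus)
    using sc sc2 by algebra
qed

lemma cross3_formula:
  "cross3 (circ x) (circ (x + t)) V = 2 * sin (pi * t) * hV V x t"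
proof -
  have e1: "2 * pi * (x + t) = 2*pi*x + 2 * (pi * t)" by (simp add: algebra_simps)
  have e2: "- 2 * pi * x = - (2*pi*x)" by simp
  show ?thesis
    unfolding circ_def hV_def zt_def e1 e2 cross3_aux ..
qed

lemma norm_zt: "norm (zt V x) = norm V"
  by (simp add: zt_def norm_mult)

lemma A_pos: "norm V < 1 \<Longrightarrow> 0 < 1 - Re (zt V x)"
  using complex_Re_le_cmod[of "zt V x"] norm_zt[of V x] by linarith

lemma tV_bounds: "0 < tV V x" "tV V x < 1"
proof -
  have "- (pi/2) < arctan (Im (zt V x) / (1 - Re (zt V x)))"
       "arctan (Im (zt V x) / (1 - Re (zt V x))) < pi/2"
    using arctan_lbound arctan_ubound by auto
  then show "0 < tV V x" "tV V x < 1" unfolding tV_def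
    by (auto simp: field_simps)
qed

lemma pos_mult_iff1: "(0::real) < c \<Longrightarrow> (0 < c * y \<longleftrightarrow> 0 < y)"
  by (simp add: zero_less_mult_iff)
lemma pos_mult_iff2: "(0::real) < c \<Longrightarrow> (c * y < 0 \<longleftrightarrow> y < 0)"
  by (simp add: mult_less_0_iff)

lemma hV_sign:
  assumes V: "norm V < 1" and t: "0 < t" "t < 1"
  shows "(0 < hV V x t \<longleftrightarrow> t < tV V x) \<and> (hV V x t < 0 \<longleftrightarrow> tV V x < t)"
proof -
  define A where "A = 1 - Re (zt V x)"
  define B where "B = Im (zt V x)"
  define \<phi> where "\<phi> = pi/2 - pi * t"
  have A: "0 < A" using A_pos[OF V] A_def by simp
  have ph1: "- (pi/2) < \<phi>" "\<phi> < pi/2" using t pi_gt_zero unfolding \<phi>_def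
    by (auto simp: field_simps)
  have cph: "0 < cos \<phi>" using ph1 by (intro cos_gt_zero_pi) auto
  have h: "hV V x t = A * cos \<phi> * (tan \<phi> - B / A)"
  proof -
    have "cos (pi * t) = sin \<phi>" "sin (pi * t) = cos \<phi>" unfolding \<phi>_def
      by (simp_all add: sin_diff cos_diff)
    then show ?thesis unfolding hV_def A_def[symmetric] B_def[symmetric] using A cph
      by (simp add: tan_def field_simps)
  qed
  have pos: "0 < A * cos \<phi>" using A cph by simp
  have e: "\<phi> = arctan (tan \<phi>)" using arctan_tan ph1 by simp
  have k1: "0 < hV V x t \<longleftrightarrow> B / A < tan \<phi>"
    unfolding h pos_mult_iff1[OF pos] by simp
  have k2: "hV V x t < 0 \<longleftrightarrow> tan \<phi> < B / A"
    unfolding h pos_mult_iff2[OF pos] by simp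
  have k3: "B / A < tan \<phi> \<longleftrightarrow> arctan (B/A) < \<phi>"
    by (subst e) (simp add: arctan_less_iff)
  have k4: "tan \<phi> < B / A \<longleftrightarrow> \<phi> < arctan (B/A)"
    by (subst (2) e) (simp add: arctan_less_iff)
  have tv: "tV V x = 1/2 - arctan (B/A) / pi" unfolding tV_def A_def B_def by simp
  have k5: "arctan (B/A) < \<phi> \<longleftrightarrow> t < tV V x"
    unfolding tv \<phi>_def using pi_gt_zero by (auto simp: field_simps)
  have k6: "\<phi> < arctan (B/A) \<longleftrightarrow> tV V x < t"
    unfolding tv \<phi>_def using pi_gt_zero by (auto simp: field_simps)
  show ?thesis using k1 k2 k3 k4 k5 k6 by blast
qed

lemma hV_zero:
  assumes V: "norm V < 1" and t: "0 < t" "t < 1"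
  shows "hV V x t = 0 \<longleftrightarrow> t = tV V x"
  using hV_sign[OF assms, of x] by (smt (verit))

lemma hV_nonneg:
  assumes V: "norm V < 1" and t: "0 < t" "t < 1"
  shows "0 \<le> hV V x t \<longleftrightarrow> t \<le> tV V x"
  using hV_sign[OF assms, of x] by (smt (verit))

lemma circ_int: "circ (x + of_int k) = circ x"
proof -
  have "circ (x + of_int k) = cis (2*pi*x) * cis (2 * pi * of_int k)"
    unfolding circ_def by (simp add: cis_mult algebra_simps)
  also have "cis (2 * pi * of_int k) = 1" by simp
  finally show ?thesis by (simp add: circ_def)
qed

lemma circ_1: "circ (x + 1) = circ x"
  using circ_int[of x 1] by simp

lemma zt_int: "zt V (x + of_int k) = zt V x"
proof -
  have "cis (- 2 * pi * (x + of_int k)) = cis (- 2 * pi * x) * cis (2 * pi * of_int (-k))"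
    by (simp add: cis_mult algebra_simps)
  also have "cis (2 * pi * of_int (-k)) = 1" by (simp only: cis_multiple_2pi Ints_of_int)
  finally show ?thesis by (simp add: zt_def)
qed

lemma tV_int: "tV V (x + of_int k) = tV V x"
  unfolding tV_def zt_int ..

lemma cross3_antisym: "cross3 a b z = - cross3 b a z"
  unfolding cross3_def by (simp add: algebra_simps)

lemma tV_cont: assumes "norm V < 1" shows "continuous_on UNIV (tV V)"
proof -
  have nz: "\<And>x. 1 - Re (zt V x) \<noteq> 0" using A_pos[OF assms] by (metis less_irrefl)
  show ?thesis unfolding tV_def zt_def
    using nz unfolding zt_def by (intro continuous_intros) auto
qed

definition W :: "complex \<Rightarrow> real \<Rightarrow> real" where
  "W V x = x + tV V x"

lemma W_cont: "norm V < 1 \<Longrightarrow> continuous_on UNIV (W V)"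
  unfolding W_def by (intro continuous_intros tV_cont)

lemma W_int: "W V (x + of_int k) = W V x + of_int k"
  unfolding W_def tV_int by simp

lemma W_1: "W V (x + 1) = W V x + 1"
  using W_int[of V x 1] by simp

lemma cross_zero_iff:
  assumes V: "norm V < 1" and t: "0 < t" "t < 1"
  shows "cross3 (circ x) (circ (x + t)) V = 0 \<longleftrightarrow> t = tV V x"
proof -
  have "0 < sin (pi * t)" using t by (intro sin_gt_zero) auto
  then show ?thesis unfolding cross3_formula using hV_zero[OF assms] by simp
qed

lemma cross_nonneg_iff:
  assumes V: "norm V < 1" and t: "0 < t" "t < 1"
  shows "0 \<le> cross3 (circ x) (circ (x + t)) V \<longleftrightarrow> t \<le> tV V x"
proof -
  have "0 < sin (pi * t)" using t by (intro sin_gt_zero) auto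
  then show ?thesis unfolding cross3_formula using hV_nonneg[OF assms]
    by (simp add: zero_le_mult_iff)
qed

lemma W_W: assumes V: "norm V < 1" shows "W V (W V x) = x + 1"
proof -
  define t1 where "t1 = tV V x"
  have t1: "0 < t1" "t1 < 1" using tV_bounds t1_def by auto
  have c0: "cross3 (circ x) (circ (x + t1)) V = 0"
    using cross_zero_iff[OF V t1, of x] t1_def by simp
  define w where "w = x + t1"
  have "cross3 (circ w) (circ (w + (1 - t1))) V = 0"
  proof -
    have "w + (1 - t1) = x + 1" unfolding w_def by simp
    then have "cross3 (circ w) (circ (w + (1 - t1))) V = cross3 (circ w) (circ x) V"
      by (simp only: circ_1)
    also have "\<dots> = - cross3 (circ x) (circ w) V" by (rule cross3_antisym)
    finally show ?thesis using c0 w_def by simp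
  qed
  then have "1 - t1 = tV V w" using cross_zero_iff[OF V, of "1 - t1" w] t1 by simp
  then show ?thesis unfolding W_def w_def t1_def by simp
qed

lemma W_inj: assumes V: "norm V < 1" shows "inj (W V)"
proof
  fix x y assume "W V x = W V y"
  then have "W V (W V x) = W V (W V y)" by simp
  then show "x = y" using W_W[OF V] by simp
qed

lemma W_mono: assumes V: "norm V < 1" and xy: "x < y" shows "W V x < W V y"
proof -
  have "(W V x < W V y \<and> W V y < W V (y+1)) \<or> (W V (y+1) < W V y \<and> W V y < W V x)"
    using continuous_inj_imp_mono[of x y "y+1" "W V"] xy
      continuous_on_subset[OF W_cont[OF V]] inj_on_subset[OF W_inj[OF V]] by auto
  then show ?thesis using W_1[of V y] by auto
qed

definition Fm :: "complex \<Rightarrow> complex \<Rightarrow> complex \<Rightarrow> real \<Rightarrow> real" where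
  "Fm P Q R x = min (W P x) (min (W Q x) (W R x))"

lemma cross3_affine:
  assumes "u + v + w = 1"
  shows "cross3 a b (u *\<^sub>R P + v *\<^sub>R Q + w *\<^sub>R R)
     = u * cross3 a b P + v * cross3 a b Q + w * cross3 a b R"
proof -
  have w: "w = 1 - u - v" using assms by simp
  show ?thesis unfolding cross3_def w scaleR_conv_of_real
    by (simp add: algebra_simps)
qed

lemma circ_frac: "circ (frac y) = circ y"
  unfolding frac_def using circ_int[of y "- \<lfloor>y\<rfloor>"] by simp

locale tri =
  fixes P Q R :: complex
  assumes nP: "norm P < 1" and nQ: "norm Q < 1" and nR: "norm R < 1"
begin

abbreviation "F \<equiv> Fm P Q R"
abbreviation "H \<equiv> convex hull {P, Q, R}"

lemma F_cont: "continuous_on UNIV F"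
  unfolding Fm_def using W_cont nP nQ nR by (intro continuous_intros) auto

lemma F_mono: "x < y \<Longrightarrow> F x < F y"
  using W_mono[OF nP, of x y] W_mono[OF nQ, of x y] W_mono[OF nR, of x y]
  unfolding Fm_def min_def by auto

lemma F_int: "F (x + of_int k) = F x + of_int k"
  unfolding Fm_def W_int by simp

lemma F_1: "F (x + 1) = F x + 1"
  using F_int[of x 1] by simp

lemma F_bounds: "x < F x" "F x < x + 1"
  unfolding Fm_def W_def using tV_bounds[of P x] tV_bounds[of Q x] tV_bounds[of R x]
  by (auto simp: min_def)

lemma F_le_W: "F x \<le> W P x"
  unfolding Fm_def by simp

lemma F_cases: "F x = W P x \<or> F x = W Q x \<or> F x = W R x"
  unfolding Fm_def by linarith

lemma key:
  assumes t: "0 < t" "t < 1"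
  shows "((\<exists>u\<in>H. cross3 (circ v) (circ (v+t)) u = 0) \<and> (\<forall>u\<in>H. 0 \<le> cross3 (circ v) (circ (v+t)) u))
         \<longleftrightarrow> t = F v - v"
proof -
  let ?c = "\<lambda>u. cross3 (circ v) (circ (v+t)) u"
  have T: "F v - v = min (tV P v) (min (tV Q v) (tV R v))" unfolding Fm_def W_def by simp
  have nnP: "0 \<le> ?c P \<longleftrightarrow> t \<le> tV P v" using cross_nonneg_iff[OF nP t] .
  have nnQ: "0 \<le> ?c Q \<longleftrightarrow> t \<le> tV Q v" using cross_nonneg_iff[OF nQ t] .
  have nnR: "0 \<le> ?c R \<longleftrightarrow> t \<le> tV R v" using cross_nonneg_iff[OF nR t] .
  have zP: "?c P = 0 \<longleftrightarrow> t = tV P v" using cross_zero_iff[OF nP t] .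
  have zQ: "?c Q = 0 \<longleftrightarrow> t = tV Q v" using cross_zero_iff[OF nQ t] .
  have zR: "?c R = 0 \<longleftrightarrow> t = tV R v" using cross_zero_iff[OF nR t] .
  have Hin: "P \<in> H" "Q \<in> H" "R \<in> H" by (simp_all add: hull_inc)
  show ?thesis
  proof
    assume A: "(\<exists>u\<in>H. ?c u = 0) \<and> (\<forall>u\<in>H. 0 \<le> ?c u)"
    then have le: "t \<le> F v - v" using Hin nnP nnQ nnR T by auto
    from A obtain u where u: "u \<in> H" "?c u = 0" by blast
    then obtain a b c where abc: "0 \<le> a" "0 \<le> b" "0 \<le> c" "a + b + c = 1"
      "u = a *\<^sub>R P + b *\<^sub>R Q + c *\<^sub>R R"
      unfolding convex_hull_3 by blast
    have s: "a * ?c P + b * ?c Q + c * ?c R = 0" using u(2) abc cross3_affine[OF abc(4)] by simp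
    have p: "0 \<le> ?c P" "0 \<le> ?c Q" "0 \<le> ?c R" using A Hin by auto
    have "(0 < a \<and> ?c P = 0) \<or> (0 < b \<and> ?c Q = 0) \<or> (0 < c \<and> ?c R = 0)"
    proof -
      have "a * ?c P = 0" "b * ?c Q = 0" "c * ?c R = 0"
        using s p abc by (smt (verit) mult_nonneg_nonneg)+
      then show ?thesis using abc by auto
    qed
    then have "F v - v \<le> t" using zP zQ zR T by auto
    then show "t = F v - v" using le by simp
  next
    assume tT: "t = F v - v"
    have p: "0 \<le> ?c P" "0 \<le> ?c Q" "0 \<le> ?c R" using nnP nnQ nnR tT T by auto
    have all: "\<forall>u\<in>H. 0 \<le> ?c u"
    proof
      fix u assume "u \<in> H"
      then obtain a b c where abc: "0 \<le> a" "0 \<le> b" "0 \<le> c" "a + b + c = 1"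
        "u = a *\<^sub>R P + b *\<^sub>R Q + c *\<^sub>R R"
        unfolding convex_hull_3 by blast
      then show "0 \<le> ?c u" using cross3_affine[OF abc(4)] p by simp
    qed
    have "?c P = 0 \<or> ?c Q = 0 \<or> ?c R = 0" using zP zQ zR tT T by linarith
    then have "\<exists>u\<in>H. ?c u = 0" using Hin by blast
    with all show "(\<exists>u\<in>H. ?c u = 0) \<and> (\<forall>u\<in>H. 0 \<le> ?c u)" by blast
  qed
qed

lemma psi_eq: assumes v: "v \<in> {0..<1}" shows "psi H v = frac (F v)"
  unfolding psi_def
proof (rule the_equality)
  define T where "T = F v - v"
  have T: "0 < T" "T < 1" using F_bounds[of v] T_def by auto
  have Fv: "F v = v + T" using T_def by simp
  show "frac (F v) \<in> {0..<1} \<and> frac (F v) \<noteq> v \<and>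
    (\<exists>u\<in>H. cross3 (circ v) (circ (frac (F v))) u = 0) \<and>
    (\<forall>u\<in>H. 0 \<le> cross3 (circ v) (circ (frac (F v))) u)"
  proof (intro conjI)
    show "frac (F v) \<in> {0..<1}" using frac_lt_1 by simp
    show "frac (F v) \<noteq> v"
    proof
      assume "frac (F v) = v"
      then have "F v - v \<in> \<int>" using frac_unique_iff by blast
      then obtain n where "T = of_int n" using T_def by (auto elim: Ints_cases)
      then show False using T by simp
    qed
    have cf: "circ (frac (F v)) = circ (v + T)" using circ_frac Fv by simp
    show "\<exists>u\<in>H. cross3 (circ v) (circ (frac (F v))) u = 0"
      "\<forall>u\<in>H. 0 \<le> cross3 (circ v) (circ (frac (F v))) u"
      unfolding cf using key[OF T, of v] T_def by auto
  qed
next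
  fix w assume A: "w \<in> {0..<1} \<and> w \<noteq> v \<and>
    (\<exists>u\<in>H. cross3 (circ v) (circ w) u = 0) \<and> (\<forall>u\<in>H. 0 \<le> cross3 (circ v) (circ w) u)"
  define t where "t = (if v < w then w - v else w - v + 1)"
  have t: "0 < t" "t < 1" using A v unfolding t_def by auto
  have cw: "circ w = circ (v + t)"
    unfolding t_def using circ_1[of w] by auto
  have "t = F v - v" using key[OF t, of v] A unfolding cw by blast
  then have "F v - w \<in> \<int>"
    unfolding t_def by (cases "v < w") (auto simp: algebra_simps elim!: subst[where P="\<lambda>z. z - w \<in> \<int>"])
  then show "w = frac (F v)" using A frac_unique_iff[of "F v" w] by auto
qed

end

lemma frac_eq_Ints: "frac a = frac b \<Longrightarrow> a - b \<in> \<int>"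
  by (metis frac_def Ints_diff Ints_of_int add_diff_cancel_left' diff_add_cancel diff_diff_eq2)

lemma frac_minus_int: "frac (a - of_int k) = frac a"
  using frac_add_of_int_right[of a "- k"] by simp

context tri
begin

lemma psi_frac: "psi H (frac y) = frac (F y)"
proof -
  have "F (frac y) = F y + of_int (- \<lfloor>y\<rfloor>)"
    unfolding frac_def using F_int[of y "- \<lfloor>y\<rfloor>"] by simp
  then show ?thesis using psi_eq[of "frac y"] frac_lt_1[of y] by (simp add: frac_minus_int)
qed

lemma lift_eq: "lift (psi H) = F"
  unfolding lift_def
proof (rule the_equality)
  show "continuous_on UNIV F \<and> (\<forall>x. frac (F x) = psi H (frac x)) \<and> F 0 \<in> {0..<1}"
    using F_cont psi_frac F_bounds[of 0] by auto
next
  fix G assume A: "continuous_on UNIV G \<and> (\<forall>x. frac (G x) = psi H (frac x)) \<and> G 0 \<in> {0..<1}"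
  define D where "D = (\<lambda>x. G x - F x)"
  have DI: "D x \<in> \<int>" for x using A psi_frac D_def frac_eq_Ints by metis
  have "D constant_on UNIV"
  proof (rule continuous_discrete_range_constant)
    show "continuous_on UNIV D" unfolding D_def using A F_cont by (intro continuous_intros) auto
    fix x
    show "\<exists>e>0. \<forall>y. y \<in> UNIV \<and> D y \<noteq> D x \<longrightarrow> e \<le> norm (D y - D x)"
      by (rule exI[of _ 1]) (auto intro!: Ints_nonzero_abs_ge1 Ints_diff DI)
  qed simp
  then have Dc: "D x = D 0" for x unfolding constant_on_def by auto
  have "D 0 = 0"
  proof -
    have "-1 < D 0" "D 0 < 1" using A F_bounds[of 0] D_def by auto
    moreover obtain n where "D 0 = of_int n" using DI[of 0] by (auto elim: Ints_cases)
    ultimately show ?thesis by simp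
  qed
  then show "G = F" using Dc D_def by (auto simp: fun_eq_iff)
qed

lemma Fn_int: "(F^^n) (x + of_int k) = (F^^n) x + of_int k"
  by (induction n) (auto simp: F_int)

lemma Fn_1: "(F^^n) (x + 1) = (F^^n) x + 1"
  using Fn_int[of n x 1] by simp

lemma Fn_mono: "x < y \<Longrightarrow> (F^^n) x < (F^^n) y"
  by (induction n) (auto simp: F_mono)

lemma Fn_mono_le: "x \<le> y \<Longrightarrow> (F^^n) x \<le> (F^^n) y"
  using Fn_mono by (cases "x = y") (auto simp: order_le_less)

lemma Fn_cont: "continuous_on UNIV (F^^n)"
proof (induction n)
  case 0 then show ?case by (simp add: continuous_on_id)
next
  case (Suc n)
  then show ?case using F_cont continuous_on_compose[of UNIV "F^^n" F]
    by (simp add: continuous_on_subset)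
qed

lemma psi_iter: "(psi H ^^ n) (frac x) = frac ((F^^n) x)"
  by (induction n) (auto simp: psi_frac)

end

locale rotm =
  fixes F :: "real \<Rightarrow> real"
  assumes mono: "x \<le> y \<Longrightarrow> F x \<le> F y"
    and F1: "F (x + 1) = F x + 1"
    and lb: "x \<le> F x" and ub: "F x \<le> x + 1"
begin

lemma Fn1: "(F^^n) (x + 1) = (F^^n) x + 1"
  by (induction n) (auto simp: F1)

lemma Fn_nat: "(F^^n) (x + of_nat k) = (F^^n) x + of_nat k"
proof (induction k)
  case (Suc k)
  then show ?case using Fn1[of n "x + of_nat k"] by (simp add: algebra_simps)
qed simp

lemma Fn_int: "(F^^n) (x + of_int k) = (F^^n) x + of_int k"
proof (cases "0 \<le> k")
  case True
  then show ?thesis using Fn_nat[of n x "nat k"] by simp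
next
  case False
  then have "(F^^n) (x + of_int k + of_nat (nat (-k))) = (F^^n) (x + of_int k) + of_nat (nat (-k))"
    using Fn_nat by blast
  then show ?thesis using False by simp
qed

lemma Fn_mono: "x \<le> y \<Longrightarrow> (F^^n) x \<le> (F^^n) y"
  by (induction n) (auto simp: mono)

definition a :: "nat \<Rightarrow> real \<Rightarrow> real" where "a n x = (F^^n) x - x"

lemma a_int: "a n (x + of_int k) = a n x"
  unfolding a_def Fn_int by simp

lemma a_dev: "\<bar>a n x - a n y\<bar> \<le> 1"
proof -
  define k where "k = \<lfloor>y - x\<rfloor>"
  define y' where "y' = y + of_int (-k)"
  have y': "x \<le> y'" "y' \<le> x + 1" unfolding y'_def k_def
    using of_int_floor_le[of "y - x"] by (auto simp: algebra_simps) linarith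
  have ay: "a n y = a n y'" unfolding y'_def a_int ..
  have "(F^^n) x \<le> (F^^n) y'" "(F^^n) y' \<le> (F^^n) (x + 1)"
    using Fn_mono y' by auto
  then have "\<bar>a n x - a n y'\<bar> \<le> 1" unfolding a_def Fn1 using y' by auto
  then show ?thesis using ay by simp
qed

lemma a_add: "a (m + n) x = a m ((F^^n) x) + a n x"
  unfolding a_def by (simp add: funpow_add)

lemma a_bnd: "0 \<le> a n x" "a n x \<le> real n"
proof -
  have "x \<le> (F^^n) x \<and> (F^^n) x \<le> x + real n" for x
  proof (induction n arbitrary: x)
    case (Suc n)
    have "(F^^Suc n) x = (F^^n) (F x)" by (simp only: funpow_Suc_right comp_def)
    then show ?case using Suc[of "F x"] lb[of x] ub[of x] by auto
  qed simp
  then show "0 \<le> a n x" "a n x \<le> real n" unfolding a_def by (auto simp: algebra_simps)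
qed

lemma a_kq: "\<bar>a (k*q) x - real k * a q 0\<bar> \<le> real k"
proof (induction k)
  case (Suc k)
  have "a (Suc k * q) x = a q ((F^^(k*q)) x) + a (k*q) x"
    using a_add[of q "k*q" x] by (simp add: add.commute)
  moreover have "\<bar>a q ((F^^(k*q)) x) - a q 0\<bar> \<le> 1" by (rule a_dev)
  ultimately show ?case using Suc by (simp add: algebra_simps)
qed (simp add: a_def)

lemma a_main:
  assumes "0 < n" "0 < q"
  shows "\<bar>a n x / real n - a q 0 / real q\<bar> \<le> 1 / real q + real q / real n"
proof -
  define k where "k = n div q"
  define r where "r = n mod q"
  have n: "n = r + k * q" unfolding k_def r_def by simp
  have rq: "r < q" unfolding r_def using assms by simp
  have an: "a n x = a r ((F^^(k*q)) x) + a (k*q) x" using a_add n by metis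
  have b1: "0 \<le> a r ((F^^(k*q)) x)" "a r ((F^^(k*q)) x) \<le> real r" using a_bnd by auto
  have b2: "0 \<le> a q 0" "a q 0 \<le> real q" using a_bnd by auto
  have b3: "0 \<le> real r * a q 0 / real q" "real r * a q 0 / real q \<le> real r"
    using b2 assms mult_left_mono[OF b2(2), of "real r"] by (auto simp: field_simps mult.commute)
  have nq: "real n * a q 0 / real q = real k * a q 0 + real r * a q 0 / real q"
    using assms unfolding n by (simp add: field_simps)
  have "\<bar>a n x - real n * a q 0 / real q\<bar> \<le> real k + real r"
    using a_kq[of k q x] b1 b3 unfolding an nq by linarith
  also have "\<dots> \<le> real n / real q + real q"
  proof -
    have "k * q \<le> n" unfolding k_def by (simp add: div_times_less_eq_dividend)
    then have "real k * real q \<le> real n" by (metis of_nat_le_iff of_nat_mult)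
    then have "real k \<le> real n / real q" using assms by (simp add: field_simps)
    then show ?thesis using rq by simp
  qed
  finally have "\<bar>a n x - real n * a q 0 / real q\<bar> \<le> real n / real q + real q" .
  then have "\<bar>a n x - real n * a q 0 / real q\<bar> / real n \<le> (real n / real q + real q) / real n"
    using assms by (simp add: divide_right_mono)
  moreover have "\<bar>a n x - real n * a q 0 / real q\<bar> / real n = \<bar>a n x / real n - a q 0 / real q\<bar>"
    using assms by (simp add: field_simps abs_div_pos[symmetric] flip: abs_divide)
  moreover have "(real n / real q + real q) / real n = 1 / real q + real q / real n"
    using assms by (simp add: field_simps)
  ultimately show ?thesis by simp
qed

lemma s_cauchy: "Cauchy (\<lambda>n. a n x / real n)"
proof (rule metric_CauchyI)
  fix e :: real assume e: "0 < e"
  obtain q :: nat where q: "4 / e < real q" using reals_Archimedean2 by blast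
  have "0 < 4 / e" using e by simp
  then have "0 < real q" using q by linarith
  then have q0: "0 < q" by simp
  have q1: "1 / real q < e / 4" using q e q0 by (simp add: field_simps)
  obtain N :: nat where N: "4 * real q / e < real N" using reals_Archimedean2 by blast
  have "0 < 4 * real q / e" using e q0 by simp
  then have "0 < real N" using N by linarith
  then have N0: "0 < N" by simp
  have N1: "real q / real n < e / 4" if "N \<le> n" for n
  proof -
    have "real N \<le> real n" using that by simp
    then have "4 * real q / e < real n" using N by linarith
    then show ?thesis using e that N0 by (simp add: field_simps)
  qed
  show "\<exists>M. \<forall>m\<ge>M. \<forall>n\<ge>M. dist (a m x / real m) (a n x / real n) < e"
  proof (intro exI allI impI)
    fix m n assume mn: "N \<le> m" "N \<le> n"
    have "\<bar>a m x / real m - a q 0 / real q\<bar> \<le> 1 / real q + real q / real m"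
      using a_main[of m q x] mn N0 q0 by simp
    moreover have "\<bar>a n x / real n - a q 0 / real q\<bar> \<le> 1 / real q + real q / real n"
      using a_main[of n q x] mn N0 q0 by simp
    ultimately show "dist (a m x / real m) (a n x / real n) < e"
      using N1[OF mn(1)] N1[OF mn(2)] q1 unfolding dist_real_def by linarith
  qed
qed

lemma rot_exists: "\<exists>!r. \<forall>x. (\<lambda>n. ((F^^n) x - x) / real n) \<longlonglongrightarrow> r"
proof -
  have s: "(\<lambda>n. ((F^^n) x - x) / real n) = (\<lambda>n. a n x / real n)" for x
    unfolding a_def ..
  define L where "L x = lim (\<lambda>n. a n x / real n)" for x
  have conv: "(\<lambda>n. a n x / real n) \<longlonglongrightarrow> L x" for x
    unfolding L_def using s_cauchy Cauchy_convergent_iff convergent_LIMSEQ_iff by blast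
  have same: "L x = L 0" for x
  proof -
    have d: "(\<lambda>n. a n x / real n - a n 0 / real n) \<longlonglongrightarrow> L x - L 0"
      using conv by (intro tendsto_diff) auto
    have "(\<lambda>n. 1 / real n) \<longlonglongrightarrow> 0" by (rule lim_const_over_n)
    moreover have "\<bar>a n x / real n - a n 0 / real n\<bar> \<le> 1 / real n" for n
    proof (cases "n = 0")
      case False
      have "\<bar>a n x / real n - a n 0 / real n\<bar> = \<bar>a n x - a n 0\<bar> / real n"
        by (simp add: diff_divide_distrib[symmetric])
      also have "\<dots> \<le> 1 / real n" using a_dev False by (simp add: divide_right_mono)
      finally show ?thesis .
    qed simp
    ultimately have "(\<lambda>n. a n x / real n - a n 0 / real n) \<longlonglongrightarrow> 0"
      using Lim_null_comparison[of "\<lambda>n. a n x / real n - a n 0 / real n" "\<lambda>n. 1 / real n" sequentially]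
      unfolding real_norm_def by (simp add: always_eventually)
    from LIMSEQ_unique[OF d this] show ?thesis by simp
  qed
  show ?thesis
  proof (rule ex1I[of _ "L 0"])
    show "\<forall>x. (\<lambda>n. ((F^^n) x - x) / real n) \<longlonglongrightarrow> L 0" using conv same s by metis
  next
    fix r assume "\<forall>x. (\<lambda>n. ((F^^n) x - x) / real n) \<longlonglongrightarrow> r"
    then have "(\<lambda>n. a n 0 / real n) \<longlonglongrightarrow> r" using s by metis
    then show "r = L 0" using conv LIMSEQ_unique by blast
  qed
qed

end

lemma all5: "(\<forall>i<(5::nat). P i) \<longleftrightarrow> P 0 \<and> P 1 \<and> P 2 \<and> P 3 \<and> P 4"
  by (auto simp: numeral_eq_Suc less_Suc_eq)
lemma all4: "(\<forall>i<(4::nat). P i) \<longleftrightarrow> P 0 \<and> P 1 \<and> P 2 \<and> P 3"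
  by (auto simp: numeral_eq_Suc less_Suc_eq)

lemma frac_m1: "frac (x - 1) = frac x"
  by (metis diff_add_cancel frac_1_eq)

lemma sort5:
  fixes g :: "real \<Rightarrow> real"
  assumes c0: "0 \<le> c0" "c0 < 1"
    and ord: "c0 < c1" "c1 < c2" "c2 < c3" "c3 < c4" "c4 < c0 + 1"
    and g: "g (frac c0) = frac c2" "g (frac c1) = frac c3" "g (frac c2) = frac c4"
           "g (frac c3) = frac c0" "g (frac c4) = frac c1"
  shows "\<exists>a :: nat \<Rightarrow> real. (\<forall>i<5. a i \<in> {0..<1}) \<and> (\<forall>i<4. a i < a (Suc i)) \<and>
            (\<forall>i<5. g (frac (a i)) = frac (a ((i + 2) mod 5)))"
proof -
  consider "c4 < 1" | "c3 < 1" "1 \<le> c4" | "c2 < 1" "1 \<le> c3" | "c1 < 1" "1 \<le> c2" | "1 \<le> c1"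
    by linarith
  then show ?thesis
  proof cases
    case 1
    show ?thesis
      by (rule exI[of _ "\<lambda>i. [c0,c1,c2,c3,c4] ! i"])
         (use 1 c0 ord g in \<open>simp add: all5 all4 frac_m1\<close>)
  next
    case 2
    show ?thesis
      by (rule exI[of _ "\<lambda>i. [c4-1,c0,c1,c2,c3] ! i"])
         (use 2 c0 ord g in \<open>simp add: all5 all4 frac_m1\<close>)
  next
    case 3
    show ?thesis
      by (rule exI[of _ "\<lambda>i. [c3-1,c4-1,c0,c1,c2] ! i"])
         (use 3 c0 ord g in \<open>simp add: all5 all4 frac_m1\<close>)
  next
    case 4
    show ?thesis
      by (rule exI[of _ "\<lambda>i. [c2-1,c3-1,c4-1,c0,c1] ! i"])
         (use 4 c0 ord g in \<open>simp add: all5 all4 frac_m1\<close>)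
  next
    case 5
    show ?thesis
      by (rule exI[of _ "\<lambda>i. [c1-1,c2-1,c3-1,c4-1,c0] ! i"])
         (use 5 c0 ord g in \<open>simp add: all5 all4 frac_m1\<close>)
  qed
qed

context tri begin

lemma F_rotm: "rotm F"
proof
  fix x y :: real assume "x \<le> y" then show "F x \<le> F y"
    using F_mono by (cases "x = y") (auto simp: order_le_less)
next
  fix x show "F (x + 1) = F x + 1" by (rule F_1)
  show "x \<le> F x" "F x \<le> x + 1" using F_bounds[of x] by auto
qed

lemma Fn_gt: "0 < n \<Longrightarrow> y < (F^^n) y"
proof (induction n)
  case (Suc n)
  show ?case
  proof (cases "n = 0")
    case True then show ?thesis using F_bounds[of y] by simp
  next
    case False
    then have "y < (F^^n) y" using Suc by simp
    then show ?thesis using F_bounds[of "(F^^n) y"] by simp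
  qed
qed simp

lemma orbit_strict: assumes "k < l" shows "(F^^k) y < (F^^l) y"
proof -
  have "(F^^((l-k)+k)) y = (F^^(l-k)) ((F^^k) y)" by (simp add: funpow_add)
  then have "(F^^l) y = (F^^(l-k)) ((F^^k) y)" using assms by simp
  then show ?thesis using Fn_gt[of "l-k" "(F^^k) y"] assms by simp
qed

lemma orbit_le: assumes "k \<le> l" shows "(F^^k) y \<le> (F^^l) y"
  using orbit_strict[of k l y] assms by (cases "k = l") auto

lemma W_mono_le: "norm V < 1 \<Longrightarrow> x \<le> y \<Longrightarrow> W V x \<le> W V y"
  using W_mono by (cases "x = y") (auto simp: order_le_less)

lemma Fn_le_W: "(F^^n) x \<le> (W P ^^ n) x"
proof (induction n)
  case (Suc n)
  have "F ((F^^n) x) \<le> W P ((F^^n) x)" by (rule F_le_W)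
  also have "\<dots> \<le> W P ((W P ^^ n) x)" using W_mono_le[OF nP Suc.IH] .
  finally show ?case by simp
qed simp

lemma W_2: "W V (2 + x) = W V x + 2"
  using W_int[of V x 2] by (simp add: add.commute)

lemma W5: "(W P ^^ 5) x = W P x + 2"
  by (simp add: eval_nat_numeral W_W[OF nP] W_1 W_2)

lemma card3: "card {P, Q, R} \<le> 3"
  by (auto simp: card_insert_if)

lemma m_cases: assumes m: "(F^^5) \<alpha> = \<alpha> + of_int m" shows "m = 2"
proof -
  have "\<alpha> < (F^^5) \<alpha>" by (rule Fn_gt) simp
  then have m1: "1 \<le> m" using m by simp
  have "(F^^5) \<alpha> \<le> W P \<alpha> + 2" using Fn_le_W[of 5 \<alpha>] W5 by simp
  moreover have "W P \<alpha> < \<alpha> + 1" unfolding W_def using tV_bounds[of P \<alpha>] by simp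
  ultimately have m3: "m < 3" using m by simp
  have "m \<noteq> 1"
  proof
    assume "m = 1"
    define x where "x k = (F^^k) \<alpha>" for k
    have x5: "x 5 = x 0 + 1" using m \<open>m = 1\<close> x_def by simp
    have xs: "x k < x l" if "k < l" for k l using orbit_strict[OF that] x_def by simp
    have xl: "x k \<le> x l" if "k \<le> l" for k l using orbit_le[OF that] x_def by simp
    have "\<forall>k. \<exists>V. V \<in> {P,Q,R} \<and> x (Suc k) = W V (x k)"
      using F_cases x_def by auto
    then obtain g where g: "\<And>k. g k \<in> {P,Q,R}" "\<And>k. x (Suc k) = W (g k) (x k)"
      by metis
    have "\<not> inj_on g {..<5}"
    proof
      assume inj: "inj_on g {..<5}"
      have "card (g ` {..<5}) = 5" using card_image[OF inj] by simp
      moreover have "card (g ` {..<(5::nat)}) \<le> card {P,Q,R}"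
        using g(1) by (intro card_mono) auto
      ultimately show False using card3 by simp
    qed
    then obtain i j where ij: "i < 5" "j < 5" "i \<noteq> j" "g i = g j"
      unfolding inj_on_def by auto
    have contra: False if "i < j" "j < 5" "g i = g j" for i j
    proof -
      define V where "V = g i"
      have nV: "norm V < 1" using g(1)[of i] nP nQ nR V_def by auto
      have xi: "x (Suc i) = W V (x i)" using g(2) V_def by simp
      have xj: "x (Suc j) = W V (x j)" using g(2) V_def that by simp
      have e1: "W V (x (Suc i)) = x i + 1" using xi W_W[OF nV] by simp
      have "W V (x (Suc i)) \<le> W V (x j)" using W_mono_le[OF nV xl[of "Suc i" j]] that by simp
      then have a1: "x i + 1 \<le> x (Suc j)" using e1 xj by simp
      have a2: "x (Suc j) \<le> x 0 + 1" using xl[of "Suc j" 5] that x5 by simp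
      have i0: "i = 0"
      proof (rule ccontr)
        assume "i \<noteq> 0" then have "x 0 < x i" using xs[of 0 i] by simp
        then show False using a1 a2 by simp
      qed
      have j4: "j = 4"
      proof (rule ccontr)
        assume "j \<noteq> 4" then have "Suc j < 5" using that by simp
        then have "x (Suc j) < x 5" using xs by blast
        then show False using a1 i0 x5 by simp
      qed
      have "x 1 < x 4" using xs by simp
      then have "W V (x 1) < W V (x 4)" using W_mono[OF nV] by simp
      then show False using e1 i0 j4 xj x5 by simp
    qed
    show False
    proof (cases "i < j")
      case True then show False using contra ij by blast
    next
      case False then have "j < i" using ij by simp
      then show False using contra[of j i] ij by simp
    qed
  qed
  then show "m = 2" using m1 m3 by simp
qed

lemma E1: "(\<exists>\<alpha>\<in>{0..<1}. (psi H ^^ 5) \<alpha> = \<alpha>) \<longleftrightarrow> (\<exists>\<alpha>\<in>{0..<1}. (F^^5) \<alpha> = \<alpha> + 2)"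
proof
  assume "\<exists>\<alpha>\<in>{0..<1}. (psi H ^^ 5) \<alpha> = \<alpha>"
  then obtain \<alpha> where a: "\<alpha> \<in> {0..<1}" "(psi H ^^ 5) \<alpha> = \<alpha>" by blast
  then have "frac ((F^^5) \<alpha>) = frac \<alpha>" using psi_iter[of 5 \<alpha>] by simp
  then have "(F^^5) \<alpha> - \<alpha> \<in> \<int>" by (rule frac_eq_Ints)
  then obtain m where "(F^^5) \<alpha> - \<alpha> = of_int m" by (auto elim: Ints_cases)
  then have m: "(F^^5) \<alpha> = \<alpha> + of_int m" by simp
  then have "m = 2" by (rule m_cases)
  then show "\<exists>\<alpha>\<in>{0..<1}. (F^^5) \<alpha> = \<alpha> + 2" using m a by auto
next
  assume "\<exists>\<alpha>\<in>{0..<1}. (F^^5) \<alpha> = \<alpha> + 2"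
  then obtain \<alpha> where a: "\<alpha> \<in> {0..<1}" "(F^^5) \<alpha> = \<alpha> + 2" by blast
  have "(psi H ^^ 5) \<alpha> = frac ((F^^5) \<alpha>)" using psi_iter[of 5 \<alpha>] a by simp
  also have "\<dots> = frac (\<alpha> + of_int 2)" using a by simp
  also have "\<dots> = \<alpha>" using a by (simp only: frac_add_of_int_right frac_eq_id)
  finally show "\<exists>\<alpha>\<in>{0..<1}. (psi H ^^ 5) \<alpha> = \<alpha>" using a by blast
qed

lemma E4: "(\<exists>\<alpha>\<in>{0..<1}. \<forall>x. frac x = \<alpha> \<longrightarrow> (F^^5) x = x + 2) \<longleftrightarrow> (\<exists>\<alpha>\<in>{0..<1}. (F^^5) \<alpha> = \<alpha> + 2)"
proof
  assume "\<exists>\<alpha>\<in>{0..<1}. \<forall>x. frac x = \<alpha> \<longrightarrow> (F^^5) x = x + 2"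
  then obtain \<alpha> where "\<alpha> \<in> {0..<1}" "\<forall>x. frac x = \<alpha> \<longrightarrow> (F^^5) x = x + 2" by blast
  then show "\<exists>\<alpha>\<in>{0..<1}. (F^^5) \<alpha> = \<alpha> + 2" using frac_eq_id by blast
next
  assume "\<exists>\<alpha>\<in>{0..<1}. (F^^5) \<alpha> = \<alpha> + 2"
  then obtain \<alpha> where a: "\<alpha> \<in> {0..<1}" "(F^^5) \<alpha> = \<alpha> + 2" by blast
  have "(F^^5) x = x + 2" if "frac x = \<alpha>" for x
  proof -
    have x: "x = \<alpha> + of_int \<lfloor>x\<rfloor>" using that by (simp add: frac_def)
    have "(F^^5) x = (F^^5) \<alpha> + of_int \<lfloor>x\<rfloor>" by (subst x, rule Fn_int)
    then show ?thesis using a x by simp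
  qed
  then show "\<exists>\<alpha>\<in>{0..<1}. \<forall>x. frac x = \<alpha> \<longrightarrow> (F^^5) x = x + 2" using a by blast
qed

end

context tri begin

lemma rn_prop: "\<forall>x. (\<lambda>n. ((F^^n) x - x) / real n) \<longlonglongrightarrow> rot_num (psi H)"
proof -
  interpret R: rotm F by (rule F_rotm)
  show ?thesis unfolding rot_num_def lift_eq using theI'[OF R.rot_exists] .
qed

lemma sub_lim: "(\<lambda>k. ((F^^(Suc k * 5)) x - x) / real (Suc k * 5)) \<longlonglongrightarrow> rot_num (psi H)"
proof -
  have sm: "strict_mono (\<lambda>k::nat. Suc k * 5)" by (auto simp: strict_mono_def)
  from LIMSEQ_subseq_LIMSEQ[OF rn_prop[rule_format, of x] sm] show ?thesis by (simp add: comp_def)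
qed


lemma rot_lb: assumes c: "\<And>y. y + c \<le> (F^^5) y" shows "c / 5 \<le> rot_num (psi H)"
proof -
  have b: "real k * c \<le> (F^^(k*5)) 0" for k
  proof (induction k)
    case (Suc k)
    have "(F^^(Suc k * 5)) 0 = (F^^5) ((F^^(k*5)) 0)"
      by (simp only: mult_Suc funpow_add comp_apply)
    then show ?case using c[of "(F^^(k*5)) 0"] Suc by (simp add: algebra_simps)
  qed simp
  have "\<forall>k\<ge>0. c / 5 \<le> ((F^^(Suc k * 5)) 0 - 0) / real (Suc k * 5)"
  proof (intro allI impI)
    fix k :: nat
    have "real (Suc k) * c \<le> (F^^(Suc k * 5)) 0" by (rule b)
    then show "c / 5 \<le> ((F^^(Suc k * 5)) 0 - 0) / real (Suc k * 5)"
      by (simp add: field_simps)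
  qed
  then show ?thesis using LIMSEQ_le_const[OF sub_lim[of 0]] by blast
qed

lemma rot_ub: assumes c: "\<And>y. (F^^5) y \<le> y + c" shows "rot_num (psi H) \<le> c / 5"
proof -
  have b: "(F^^(k*5)) 0 \<le> real k * c" for k
  proof (induction k)
    case (Suc k)
    have "(F^^(Suc k * 5)) 0 = (F^^5) ((F^^(k*5)) 0)"
      by (simp only: mult_Suc funpow_add comp_apply)
    then show ?case using c[of "(F^^(k*5)) 0"] Suc by (simp add: algebra_simps)
  qed simp
  have "\<forall>k\<ge>0. ((F^^(Suc k * 5)) 0 - 0) / real (Suc k * 5) \<le> c / 5"
  proof (intro allI impI)
    fix k :: nat
    have "(F^^(Suc k * 5)) 0 \<le> real (Suc k) * c" by (rule b)
    then show "((F^^(Suc k * 5)) 0 - 0) / real (Suc k * 5) \<le> c / 5"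
      by (simp add: field_simps)
  qed
  then show ?thesis using LIMSEQ_le_const2[OF sub_lim[of 0]] by blast
qed

lemma E2: "rot_num (psi H) = 2/5 \<longleftrightarrow> (\<exists>\<alpha>\<in>{0..<1}. (F^^5) \<alpha> = \<alpha> + 2)"
proof
  assume r: "rot_num (psi H) = 2/5"
  show "\<exists>\<alpha>\<in>{0..<1}. (F^^5) \<alpha> = \<alpha> + 2"
  proof (rule ccontr)
    assume no: "\<not> (\<exists>\<alpha>\<in>{0..<1}. (F^^5) \<alpha> = \<alpha> + 2)"
    define G where "G x = (F^^5) x - x" for x
    have Gc: "continuous_on S G" for S unfolding G_def
      using Fn_cont[of 5] by (intro continuous_intros) (auto intro: continuous_on_subset)
    have Gf: "G (frac x) = G x" for x
    proof -
      have "(F^^5) (x + of_int (- \<lfloor>x\<rfloor>)) = (F^^5) x + of_int (- \<lfloor>x\<rfloor>)" by (rule Fn_int)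
      then show ?thesis unfolding G_def frac_def by simp
    qed
    have ne: "G x \<noteq> 2" for x
    proof
      assume "G x = 2"
      then have "G (frac x) = 2" using Gf by simp
      then have "(F^^5) (frac x) = frac x + 2" unfolding G_def by simp
      moreover have "frac x \<in> {0..<1}" using frac_lt_1[of x] frac_ge_0[of x] by simp
      ultimately show False using no by blast
    qed
    have cpt: "compact {0..1::real}" "{0..1::real} \<noteq> {}" by auto
    consider "2 < G 0" | "G 0 < 2" using ne[of 0] by linarith
    then show False
    proof cases
      case 1
      have all: "2 < G x" if x01: "x \<in> {0..1}" for x
      proof (rule ccontr)
        assume "\<not> 2 < G x"
        then have "G x \<le> 2" by simp
        then obtain y where "G y = 2" using IVT2'[of G x 2 0] 1 x01 Gc by auto
        then show False using ne by simp
      qed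
      obtain x0 where x0: "x0 \<in> {0..1}" "\<And>x. x \<in> {0..1} \<Longrightarrow> G x0 \<le> G x"
        using continuous_attains_inf[OF cpt Gc] by blast
      have "\<And>y. y + G x0 \<le> (F^^5) y"
      proof -
        fix y
        have "G x0 \<le> G (frac y)" using x0(2)[of "frac y"] frac_lt_1[of y] by simp
        then show "y + G x0 \<le> (F^^5) y" using Gf unfolding G_def by simp
      qed
      then have "G x0 / 5 \<le> rot_num (psi H)" by (rule rot_lb)
      then show False using all[OF x0(1)] r by simp
    next
      case 2
      have all: "G x < 2" if x01: "x \<in> {0..1}" for x
      proof (rule ccontr)
        assume "\<not> G x < 2"
        then have "2 \<le> G x" by simp
        then obtain y where "G y = 2" using IVT'[of G 0 2 x] 2 x01 Gc by auto
        then show False using ne by simp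
      qed
      obtain x0 where x0: "x0 \<in> {0..1}" "\<And>x. x \<in> {0..1} \<Longrightarrow> G x \<le> G x0"
        using continuous_attains_sup[OF cpt Gc] by blast
      have "\<And>y. (F^^5) y \<le> y + G x0"
      proof -
        fix y
        have "G (frac y) \<le> G x0" using x0(2)[of "frac y"] frac_lt_1[of y] by simp
        then show "(F^^5) y \<le> y + G x0" using Gf unfolding G_def by simp
      qed
      then have "rot_num (psi H) \<le> G x0 / 5" by (rule rot_ub)
      then show False using all[OF x0(1)] r by simp
    qed
  qed
next
  assume "\<exists>\<alpha>\<in>{0..<1}. (F^^5) \<alpha> = \<alpha> + 2"
  then obtain \<alpha> where a: "(F^^5) \<alpha> = \<alpha> + 2" by blast
  have b: "(F^^(k*5)) \<alpha> = \<alpha> + 2 * real k" for k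
  proof (induction k)
    case (Suc k)
    have "(F^^(Suc k * 5)) \<alpha> = (F^^5) ((F^^(k*5)) \<alpha>)"
      by (simp only: mult_Suc funpow_add comp_apply)
    also have "\<dots> = (F^^5) (\<alpha> + of_int (2 * int k))" using Suc by simp
    also have "\<dots> = (F^^5) \<alpha> + of_int (2 * int k)" by (rule Fn_int)
    finally show ?case using a by simp
  qed simp
  have "(\<lambda>k. ((F^^(Suc k * 5)) \<alpha> - \<alpha>) / real (Suc k * 5)) = (\<lambda>k. 2/5)"
  proof (rule ext)
    fix k
    have e: "(F^^(Suc k * 5)) \<alpha> - \<alpha> = 2 * real (Suc k)" using b[of "Suc k"] by simp
    have "real (Suc k * 5) = 5 * real (Suc k)" by simp
    then show "((F^^(Suc k * 5)) \<alpha> - \<alpha>) / real (Suc k * 5) = 2/5" unfolding e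
      by (simp only:) (simp add: field_simps del: of_nat_Suc)
  qed
  then have "(\<lambda>k. 2/5) \<longlonglongrightarrow> rot_num (psi H)" using sub_lim[of \<alpha>] by simp
  then show "rot_num (psi H) = 2/5" using LIMSEQ_unique tendsto_const by blast
qed

lemma E3: "(\<exists>a :: nat \<Rightarrow> real. (\<forall>i<5. a i \<in> {0..<1}) \<and> (\<forall>i<4. a i < a (Suc i)) \<and>
            (\<forall>i<5. psi H (frac (a i)) = frac (a ((i + 2) mod 5))))
     \<longleftrightarrow> (\<exists>\<alpha>\<in>{0..<1}. (F^^5) \<alpha> = \<alpha> + 2)"
proof
  assume "\<exists>a :: nat \<Rightarrow> real. (\<forall>i<5. a i \<in> {0..<1}) \<and> (\<forall>i<4. a i < a (Suc i)) \<and>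
            (\<forall>i<5. psi H (frac (a i)) = frac (a ((i + 2) mod 5)))"
  then obtain a :: "nat \<Rightarrow> real" where a: "\<forall>i<5. a i \<in> {0..<1}"
     "\<forall>i<5. psi H (frac (a i)) = frac (a ((i + 2) mod 5))" by blast
  have fa: "frac (a 0) = a 0" "frac (a 1) = a 1" "frac (a 2) = a 2" "frac (a 3) = a 3" "frac (a 4) = a 4"
    using a(1) unfolding all5 by (auto simp: frac_eq)
  have h: "psi H (frac (a i)) = frac (a ((i + 2) mod 5))" if "i < 5" for i using a(2) that by blast
  have ps: "psi H (a 0) = a 2" "psi H (a 1) = a 3" "psi H (a 2) = a 4" "psi H (a 3) = a 0" "psi H (a 4) = a 1"
  proof -
    have e: "((0::nat) + 2) mod 5 = 2" "((1::nat)+2) mod 5 = 3" "((2::nat)+2) mod 5 = 4"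
      "((3::nat)+2) mod 5 = 0" "((4::nat)+2) mod 5 = 1" by simp_all
    have "psi H (frac (a 0)) = frac (a 2)" using h[of 0] unfolding e by simp
    moreover have "psi H (frac (a 1)) = frac (a 3)" using h[of 1] unfolding e by simp
    moreover have "psi H (frac (a 2)) = frac (a 4)" using h[of 2] unfolding e by simp
    moreover have "psi H (frac (a 3)) = frac (a 0)" using h[of 3] unfolding e by simp
    moreover have "psi H (frac (a 4)) = frac (a 1)" using h[of 4] unfolding e by simp
    ultimately show "psi H (a 0) = a 2" "psi H (a 1) = a 3" "psi H (a 2) = a 4" "psi H (a 3) = a 0" "psi H (a 4) = a 1"
      unfolding fa by simp_all
  qed
  have p5: "(f^^5) y = f (f (f (f (f y))))" for f :: "real \<Rightarrow> real" and y
    by (simp add: numeral_eq_Suc)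
  have "(psi H ^^ 5) (a 0) = a 0" unfolding p5 by (simp only: ps)
  then have "\<exists>\<alpha>\<in>{0..<1}. (psi H ^^ 5) \<alpha> = \<alpha>" using a(1) by auto
  then show "\<exists>\<alpha>\<in>{0..<1}. (F^^5) \<alpha> = \<alpha> + 2" using E1 by blast
next
  assume "\<exists>\<alpha>\<in>{0..<1}. (F^^5) \<alpha> = \<alpha> + 2"
  then obtain \<alpha> where a: "\<alpha> \<in> {0..<1}" "(F^^5) \<alpha> = \<alpha> + 2" by blast
  define x where "x k = (F^^k) \<alpha>" for k
  have xa: "x (m + n) = (F^^m) (x n)" for m n unfolding x_def by (simp add: funpow_add)
  have xs: "x k < x l" if "k < l" for k l using orbit_strict[OF that] x_def by simp
  have x5: "x 5 = x 0 + 2" using a x_def by simp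
  have x0: "x 0 = \<alpha>" using x_def by simp
  have i: "x 2 < x 0 + 1"
  proof (rule ccontr)
    assume "\<not> x 2 < x 0 + 1"
    then have "(F^^2) (x 0 + 1) \<le> (F^^2) (x 2)" using Fn_mono_le by simp
    then have "x 2 + 1 \<le> x 4" using xa[of 2 0] xa[of 2 2] Fn_1 by simp
    then show False using \<open>\<not> x 2 < x 0 + 1\<close> xs[of 4 5] x5 by simp
  qed
  have ii: "x 0 + 1 < x 3"
  proof (rule ccontr)
    assume "\<not> x 0 + 1 < x 3"
    then have "(F^^3) (x 3) \<le> (F^^3) (x 0 + 1)" using Fn_mono_le by simp
    then have "x 6 \<le> x 3 + 1" using xa[of 3 0] xa[of 3 3] Fn_1 by simp
    then show False using \<open>\<not> x 0 + 1 < x 3\<close> xs[of 5 6] x5 by simp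
  qed
  have Fx: "F (x k) = x (Suc k)" for k unfolding x_def by simp
  have f1: "F (x 1) = x 2" "F (x 0) = x 1" "F (x 2) = x 3" "F (x 3) = x 4" "F (x 4) = x 0 + 2"
    using x5 unfolding x_def by (simp_all add: eval_nat_numeral)
  have fp2: "frac (y + 2) = frac y" for y using frac_add_of_int_right[of y 2] by simp
  have iii: "x 3 < x 1 + 1"
  proof -
    have "F (x 2) < F (x 0 + 1)" using F_mono[OF i] .
    then show ?thesis using Fx[of 2] Fx[of 0] F_1[of "x 0"] by simp
  qed
  have iv: "x 1 + 1 < x 4"
  proof -
    have "F (x 0 + 1) < F (x 3)" using F_mono[OF ii] .
    then show ?thesis using Fx[of 3] Fx[of 0] F_1[of "x 0"] by simp
  qed
  have v: "x 4 < x 2 + 1"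
  proof -
    have "F (x 2) < F (x 0 + 1)" using F_mono[OF i] .
    then have "F (F (x 2)) < F (F (x 0 + 1))" using F_mono by blast
    have "F (F (x 0 + 1)) = x 2 + 1" by (simp only: F_1 f1)
    moreover have "F (F (x 2)) = x 4" by (simp only: f1)
    ultimately show ?thesis using \<open>F (F (x 2)) < F (F (x 0 + 1))\<close> by linarith
  qed
  have Fm1: "F (y - 1) = F y - 1" for y using F_int[of y "-1"] by simp
  have g: "psi H (frac (x 0)) = frac (x 1)" "psi H (frac (x 3 - 1)) = frac (x 4 - 1)"
     "psi H (frac (x 1)) = frac (x 2)" "psi H (frac (x 4 - 1)) = frac (x 0)"
     "psi H (frac (x 2)) = frac (x 3 - 1)"
    by (simp_all only: f1 psi_frac Fm1 frac_m1 fp2)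
  show "\<exists>a :: nat \<Rightarrow> real. (\<forall>i<5. a i \<in> {0..<1}) \<and> (\<forall>i<4. a i < a (Suc i)) \<and>
            (\<forall>i<5. psi H (frac (a i)) = frac (a ((i + 2) mod 5)))"
    by (rule sort5[of "x 0" "x 3 - 1" "x 1" "x 4 - 1" "x 2"])
       (use a(1) x0 i ii iii iv v g in auto)
qed

end

theorem lemma4p1:
  fixes P Q R :: complex
  assumes "norm P < 1" "norm Q < 1" "norm R < 1"
    and "\<not> collinear {P, Q, R}"
  defines "\<psi> \<equiv> psi (convex hull {P, Q, R})"
  shows "((\<exists>\<alpha>\<in>{0..<1}. (\<psi> ^^ 5) \<alpha> = \<alpha>) \<longleftrightarrow> rot_num \<psi> = 2/5)
    \<and> (rot_num \<psi> = 2/5 \<longleftrightarrow>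
         (\<exists>a :: nat \<Rightarrow> real. (\<forall>i<5. a i \<in> {0..<1}) \<and> (\<forall>i<4. a i < a (Suc i)) \<and>
            (\<forall>i<5. \<psi> (frac (a i)) = frac (a ((i + 2) mod 5)))))
    \<and> ((\<exists>a :: nat \<Rightarrow> real. (\<forall>i<5. a i \<in> {0..<1}) \<and> (\<forall>i<4. a i < a (Suc i)) \<and>
            (\<forall>i<5. \<psi> (frac (a i)) = frac (a ((i + 2) mod 5))))
         \<longleftrightarrow> (\<exists>\<alpha>\<in>{0..<1}. \<forall>x. frac x = \<alpha> \<longrightarrow> ((lift \<psi>) ^^ 5) x = x + 2))"
proof -
  interpret tri P Q R using assms(1-3) by unfold_locales
  show ?thesis unfolding \<psi>_def lift_eq E1 E2 E3 E4 by simp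
qed

end
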